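(* There is an absolute constant $c>0$ such that for every $n\ge1$, every $\epsilon\in(1/n,1]$, and every $\epsilon$-differentially private algorithm $M$ that takes a private edge set $E$ on a fixed vertex set $V$ with $|V|=n$ and outputs an orientation $M_E$ assigning to each unordered pair $\{u,v\}$ of distinct vertices one of its endpoints $M_E(\{u,v\})\in\{u,v\}$, there exists a graph $G=(V,E)$ with $E\neq\emptyset$ such that $\mathbb{E}\big[|\{M_E(e):e\in E\}|\big]\ge \frac{c}{\epsilon}\,\mathrm{OPT}(G)$.
   Context: $M$ is $\epsilon$-differentially private if for any two edge sets $E,E'$ on $V$ with symmetric difference of size one and any set $\mathcal{O}$ of outputs, $\Pr[M(E)\in\mathcal{O}]\le e^{\epsilon}\Pr[M(E')\in\mathcal{O}]$. The set $\{M_E(e):e\in E\}$ is a vertex cover of $G$; $\mathrm{OPT}(G)$ denotes the minimum size of a vertex cover of $G$. *)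

theory Defs
  imports "HOL-Probability.Probability"
begin

definition pairs :: "'a set \<Rightarrow> 'a set set" where
  "pairs V = {{u, v} | u v. u \<in> V \<and> v \<in> V \<and> u \<noteq> v}"

definition edge_sets :: "'a set \<Rightarrow> 'a set set set" where
  "edge_sets V = Pow (pairs V)"

text \<open>Orientations: each pair {u,v} is mapped to one of its endpoints;
  outside the pairs the value is fixed (undefined), so the output space
  is exactly the set of orientations.\<close>
definition orientations :: "'a set \<Rightarrow> ('a set \<Rightarrow> 'a) set" where
  "orientations V = {f. (\<forall>e\<in>pairs V. f e \<in> e) \<and> (\<forall>e. e \<notin> pairs V \<longrightarrow> f e = undefined)}"

definition is_vertex_cover :: "'a set \<Rightarrow> 'a set set \<Rightarrow> 'a set \<Rightarrow> bool" where
  "is_vertex_cover V E C \<longleftrightarrow> C \<subseteq> V \<and> (\<forall>e\<in>E. e \<inter> C \<noteq> {})"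

definition OPT :: "'a set \<Rightarrow> 'a set set \<Rightarrow> nat" where
  "OPT V E = Min {card C | C. is_vertex_cover V E C}"

definition edge_dp :: "real \<Rightarrow> 'a set \<Rightarrow> ('a set set \<Rightarrow> 'b pmf) \<Rightarrow> bool" where
  "edge_dp \<epsilon> V M \<longleftrightarrow>
     (\<forall>E\<in>edge_sets V. \<forall>E'\<in>edge_sets V. card (E - E' \<union> (E' - E)) = 1 \<longrightarrow>
        (\<forall>S. measure_pmf.prob (M E) S \<le> exp \<epsilon> * measure_pmf.prob (M E') S))"

end

theory Submission
  imports Defs
begin

lemma finite_pairs: "finite V \<Longrightarrow> finite (pairs V)"
proof -
  assume "finite V"
  moreover have "pairs V \<subseteq> Pow V" unfolding pairs_def by auto
  ultimately show ?thesis by (meson finite_Pow_iff finite_subset)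
qed

lemma finite_orient: "finite V \<Longrightarrow> finite (orientations V)"
proof -
  assume fV: "finite V"
  have "orientations V = PiE (pairs V) (\<lambda>e. e)"
    unfolding orientations_def PiE_def extensional_def Pi_def by auto
  moreover have "\<And>e. e \<in> pairs V \<Longrightarrow> finite e" unfolding pairs_def by auto
  ultimately show ?thesis using finite_PiE finite_pairs[OF fV] by metis
qed

lemma group_dp:
  assumes dp: "edge_dp \<epsilon> V M" and fV: "finite V"
  shows "F \<subseteq> pairs V \<Longrightarrow> measure_pmf.prob (M {}) S \<le> exp (\<epsilon> * card F) * measure_pmf.prob (M F) S"
proof (induction F rule: infinite_finite_induct)
  case (infinite A)
  then show ?case using finite_pairs[OF fV] finite_subset by blast
next
  case empty
  then show ?case by simp
next
  case (insert x F)
  have F: "F \<subseteq> pairs V" using insert by auto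
  have "card (F - insert x F \<union> (insert x F - F)) = 1"
  proof -
    have "F - insert x F \<union> (insert x F - F) = {x}" using insert by auto
    then show ?thesis by simp
  qed
  moreover have "F \<in> edge_sets V" "insert x F \<in> edge_sets V"
    using insert unfolding edge_sets_def by auto
  ultimately have step: "measure_pmf.prob (M F) S \<le> exp \<epsilon> * measure_pmf.prob (M (insert x F)) S"
    using dp unfolding edge_dp_def by blast
  have "measure_pmf.prob (M {}) S \<le> exp (\<epsilon> * card F) * measure_pmf.prob (M F) S"
    using insert.IH F .
  also have "\<dots> \<le> exp (\<epsilon> * card F) * (exp \<epsilon> * measure_pmf.prob (M (insert x F)) S)"
    using step by (simp add: mult_left_mono)
  also have "\<dots> = exp (\<epsilon> * card (insert x F)) * measure_pmf.prob (M (insert x F)) S"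
    using insert by (simp add: distrib_left exp_add)
  finally show ?case .
qed

lemma comb:
  assumes fS: "finite S" and cS: "card S = k + 1" and SV: "S \<subseteq> V"
    and f: "f \<in> orientations V"
  shows "real (k * (k + 1)) \<le> 2 * (\<Sum>v\<in>S. real (card {w \<in> S - {v}. f {v, w} = w}))"
proof -
  define B where "B = Sigma S (\<lambda>v. {w \<in> S - {v}. f {v, w} = w})"
  define D where "D = Sigma S (\<lambda>v. S - {v})"
  have fB: "finite B" unfolding B_def using fS by auto
  have cB: "card B = (\<Sum>v\<in>S. card {w \<in> S - {v}. f {v, w} = w})"
    unfolding B_def using fS by simp
  have cD: "card D = (k + 1) * k"
    unfolding D_def using fS cS by simp
  have "D \<subseteq> B \<union> (\<lambda>(a,b). (b,a)) ` B"
  proof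
    fix p assume "p \<in> D"
    then obtain v w where p: "p = (v,w)" "v \<in> S" "w \<in> S" "v \<noteq> w" unfolding D_def by auto
    have "{v,w} \<in> pairs V" unfolding pairs_def using p SV by auto
    then have "f {v,w} \<in> {v,w}" using f unfolding orientations_def by auto
    then show "p \<in> B \<union> (\<lambda>(a,b). (b,a)) ` B"
    proof
      assume "f {v,w} = v"
      then have "(w,v) \<in> B" unfolding B_def using p by (auto simp: insert_commute)
      then show ?thesis using p by force
    next
      assume "f {v,w} \<in> {w}"
      then show ?thesis unfolding B_def using p by auto
    qed
  qed
  then have "card D \<le> card (B \<union> (\<lambda>(a,b). (b,a)) ` B)"
    by (intro card_mono) (use fB in auto)
  also have "\<dots> \<le> card B + card ((\<lambda>(a,b). (b,a)) ` B)" by (rule card_Un_le)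
  also have "\<dots> \<le> 2 * card B" using card_image_le[OF fB, of "\<lambda>(a,b). (b,a)"] by simp
  finally have "(k+1) * k \<le> 2 * card B" using cD by simp
  then have "real ((k+1) * k) \<le> real (2 * card B)" by linarith
  then show ?thesis using cB by (simp add: mult.commute)
qed

theorem mainTheorem8:
  shows "\<exists>c::real. c > 0 \<and>
    (\<forall>(n::nat) (\<epsilon>::real) (V::nat set) (M :: nat set set \<Rightarrow> (nat set \<Rightarrow> nat) pmf).
       n \<ge> 1 \<longrightarrow> 1 / real n < \<epsilon> \<longrightarrow> \<epsilon> \<le> 1 \<longrightarrow> finite V \<longrightarrow> card V = n \<longrightarrow>
       (\<forall>E\<in>edge_sets V. set_pmf (M E) \<subseteq> orientations V) \<longrightarrow>
       edge_dp \<epsilon> V M \<longrightarrow>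
       (\<exists>E\<in>edge_sets V. E \<noteq> {} \<and>
          measure_pmf.expectation (M E) (\<lambda>f. real (card (f ` E)))
            \<ge> c / \<epsilon> * real (OPT V E)))"
proof (intro exI[of _ "1/12"] conjI allI impI)
  fix n :: nat and \<epsilon> :: real and V :: "nat set" and M :: "nat set set \<Rightarrow> (nat set \<Rightarrow> nat) pmf"
  assume n1: "n \<ge> 1" and eps_lo: "1 / real n < \<epsilon>" and eps_hi: "\<epsilon> \<le> 1"
    and fV: "finite V" and cV: "card V = n"
    and supp: "\<forall>E\<in>edge_sets V. set_pmf (M E) \<subseteq> orientations V"
    and dp: "edge_dp \<epsilon> V M"
  have "1/real n > 0" using n1 by simp
  then have eps_pos: "\<epsilon> > 0" using eps_lo by linarith
  define k where "k = nat \<lfloor>1/\<epsilon>\<rfloor>"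
  have inv1: "1/\<epsilon> \<ge> 1" using eps_pos eps_hi by simp
  have kle: "real k \<le> 1/\<epsilon>" unfolding k_def using inv1 by linarith
  have kgt: "real k > 1/\<epsilon> - 1" unfolding k_def using inv1 by linarith
  have k1: "k \<ge> 1" unfolding k_def using inv1 by linarith
  have k2: "2 * real k \<ge> 1/\<epsilon>" using kgt k1 by linarith
  have "1/\<epsilon> < real n" using eps_lo eps_pos n1
    by (simp add: divide_less_eq mult.commute)
  then have "real k < real n" using kle by linarith
  then have kn: "k + 1 \<le> card V" using cV by linarith
  have ek: "\<epsilon> * real k \<le> 1" using kle eps_pos by (simp add: field_simps)
  obtain S where SV: "S \<subseteq> V" and cS: "card S = k + 1" and fS: "finite S"
    using obtain_subset_with_card_n[OF kn] by metis
  define A where "A = orientations V"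
  have fA: "finite A" unfolding A_def using finite_orient[OF fV] .
  define X where "X = (\<lambda>v (f::nat set \<Rightarrow> nat). real (card {w \<in> S - {v}. f {v, w} = w}))"
  define T where "T = (\<lambda>v. \<Sum>a\<in>A. pmf (M {}) a * X v a)"
  have e0: "{} \<in> edge_sets V" unfolding edge_sets_def by simp
  have s0: "set_pmf (M {}) \<subseteq> A" using supp e0 unfolding A_def by blast
  have sumT: "(\<Sum>v\<in>S. T v) = (\<Sum>a\<in>A. pmf (M {}) a * (\<Sum>v\<in>S. X v a))"
    unfolding T_def by (simp add: sum.swap[of _ S] sum_distrib_left)
  also have "\<dots> \<ge> (\<Sum>a\<in>A. pmf (M {}) a * (real (k * (k+1)) / 2))"
  proof (rule sum_mono)
    fix a assume "a \<in> A"
    then have "real (k * (k + 1)) / 2 \<le> (\<Sum>v\<in>S. X v a)"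
      using comb[OF fS cS SV, of a] unfolding A_def X_def by simp
    then show "pmf (M {}) a * (real (k * (k+1)) / 2) \<le> pmf (M {}) a * (\<Sum>v\<in>S. X v a)"
      by (intro mult_left_mono) simp_all
  qed
  also have "(\<Sum>a\<in>A. pmf (M {}) a * (real (k * (k+1)) / 2)) = (\<Sum>a\<in>A. pmf (M {}) a) * (real (k * (k+1)) / 2)"
    by (rule sum_distrib_right[symmetric])
  also have "\<dots> = real (k * (k+1)) / 2" using sum_pmf_eq_1[OF fA s0] by simp
  finally have "(\<Sum>v\<in>S. T v) \<ge> real (k * (k+1)) / 2" .
  have "\<exists>v\<in>S. T v \<ge> real k / 2"
  proof (rule ccontr)
    assume "\<not> ?thesis"
    then have "\<forall>v\<in>S. T v < real k / 2" by auto
    then have "(\<Sum>v\<in>S. T v) < (\<Sum>v\<in>S. real k / 2)"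
      using fS cS by (intro sum_strict_mono) auto
    also have "\<dots> = real (k+1) * real k / 2" using cS by simp
    finally show False using \<open>(\<Sum>v\<in>S. T v) \<ge> real (k * (k+1)) / 2\<close> by (simp add: algebra_simps)
  qed
  then obtain v where vS: "v \<in> S" and Tv: "T v \<ge> real k / 2" by blast
  define E where "E = (\<lambda>w. {v, w}) ` (S - {v})"
  have fE: "finite E" unfolding E_def using fS by simp
  have cE: "card E \<le> k" unfolding E_def using card_image_le[of "S - {v}" "\<lambda>w. {v,w}"] fS cS vS by simp
  have EP: "E \<subseteq> pairs V" unfolding E_def pairs_def using SV vS by auto
  then have Ee: "E \<in> edge_sets V" unfolding edge_sets_def by simp
  have Ene: "E \<noteq> {}"
  proof -
    have "card (S - {v}) = k" using cS vS fS by simp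
    then have "S - {v} \<noteq> {}" using k1 by (metis card.empty not_one_le_zero)
    then show ?thesis unfolding E_def by simp
  qed
  have sE: "set_pmf (M E) \<subseteq> A" using supp Ee unfolding A_def by blast
  have pmf_le: "pmf (M {}) a \<le> exp 1 * pmf (M E) a" for a
  proof -
    have "pmf (M {}) a \<le> exp (\<epsilon> * card E) * pmf (M E) a"
      using group_dp[OF dp fV EP, of "{a}"] by (simp add: measure_pmf_single)
    also have "\<dots> \<le> exp 1 * pmf (M E) a"
    proof (rule mult_right_mono)
      have "\<epsilon> * card E \<le> \<epsilon> * k" using cE eps_pos by (simp add: mult_left_mono)
      then show "exp (\<epsilon> * card E) \<le> exp 1" using ek by simp
    qed simp
    finally show ?thesis .
  qed
  have Xle: "X v a \<le> real (card (a ` E))" for a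
  proof -
    have "{w \<in> S - {v}. a {v, w} = w} \<subseteq> a ` E"
    proof
      fix w assume w: "w \<in> {w \<in> S - {v}. a {v, w} = w}"
      then have "{v,w} \<in> E" unfolding E_def by blast
      moreover have "w = a {v,w}" using w by simp
      ultimately show "w \<in> a ` E" by (rule rev_image_eqI)
    qed
    then show ?thesis unfolding X_def using fE by (simp add: card_mono)
  qed
  have Xnn: "X v a \<ge> 0" for a unfolding X_def by simp
  have expE: "measure_pmf.expectation (M E) (\<lambda>f. real (card (f ` E))) = (\<Sum>a\<in>A. pmf (M E) a * real (card (a ` E)))"
    using integral_measure_pmf[OF fA, of "M E" "\<lambda>f. real (card (f ` E))"] sE by auto
  have "real k / 2 \<le> T v" by (rule Tv)
  also have "\<dots> \<le> (\<Sum>a\<in>A. exp 1 * pmf (M E) a * real (card (a ` E)))"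
    unfolding T_def
  proof (rule sum_mono)
    fix a
    show "pmf (M {}) a * X v a \<le> exp 1 * pmf (M E) a * real (card (a ` E))"
      using pmf_le[of a] Xle[of a] Xnn[of a]
      by (intro mult_mono) auto
  qed
  also have "\<dots> = exp 1 * measure_pmf.expectation (M E) (\<lambda>f. real (card (f ` E)))"
    unfolding expE by (simp add: sum_distrib_left mult.assoc)
  finally have main: "real k / 2 \<le> exp 1 * measure_pmf.expectation (M E) (\<lambda>f. real (card (f ` E)))" .
  have OPT1: "OPT V E \<le> 1"
  proof -
    have cov: "is_vertex_cover V E {v}" unfolding is_vertex_cover_def E_def using SV vS by auto
    have "{card C | C. is_vertex_cover V E C} \<subseteq> {0..card V}"
      unfolding is_vertex_cover_def using fV by (auto intro: card_mono)
    then have "finite {card C | C. is_vertex_cover V E C}" using finite_subset by blast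
    moreover have "1 \<in> {card C | C. is_vertex_cover V E C}" using cov by force
    ultimately show ?thesis unfolding OPT_def by (rule Min_le)
  qed
  have "1/12 / \<epsilon> * real (OPT V E) \<le> 1/12 / \<epsilon>"
  proof -
    have "real (OPT V E) \<le> 1" using OPT1 by simp
    moreover have "1/12/\<epsilon> \<ge> 0" using eps_pos by simp
    ultimately show ?thesis using mult_left_mono[of "real (OPT V E)" 1 "1/12/\<epsilon>"] by simp
  qed
  also have "\<dots> \<le> real k / 6" using k2 by (simp add: field_simps)
  also have "\<dots> \<le> measure_pmf.expectation (M E) (\<lambda>f. real (card (f ` E)))"
  proof -
    have "exp 1 * measure_pmf.expectation (M E) (\<lambda>f. real (card (f ` E))) \<ge> 0"
      using main by (smt (verit) of_nat_0_le_iff divide_nonneg_nonneg)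
    then have y0: "measure_pmf.expectation (M E) (\<lambda>f. real (card (f ` E))) \<ge> 0" by (simp add: zero_le_mult_iff)
    have "exp 1 * measure_pmf.expectation (M E) (\<lambda>f. real (card (f ` E))) \<le> 3 * measure_pmf.expectation (M E) (\<lambda>f. real (card (f ` E)))"
      using exp_le y0 by (rule mult_right_mono)
    then show ?thesis using main by linarith
  qed
  finally show "\<exists>E\<in>edge_sets V. E \<noteq> {} \<and>
          measure_pmf.expectation (M E) (\<lambda>f. real (card (f ` E)))
            \<ge> 1/12 / \<epsilon> * real (OPT V E)" using Ee Ene by blast
qed simp

end
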